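(* Let $f^*:\{\pm1\}^d\to\mathbb R$. Then $f^*$ satisfies the stable merged-staircase property if and only if it satisfies the sufficient impurity decrease condition for some $\lambda>0$, namely: for every cell $C$ with $\operatorname{Var}\{f^*(\mathbf X)\mid\mathbf X\in C\}>0$, $\max_{k\in[d]\setminus J(C)}\operatorname{Corr}^2\{f^*(\mathbf X),X_k\mid\mathbf X\in C\}\ge\lambda$, where $\mathbf X$ is uniform on $\{\pm1\}^d$.
   Context: $\chi_S(\mathbf x)=\prod_{j\in S}x_j$. Every $f:\{\pm1\}^m\to\mathbb R$ has a unique expansion $f=\sum_S\beta_S\chi_S$; $f$ satisfies MSP if the sets $S$ with $\beta_S\ne0$ can be ordered $S_1,\dots,S_r$ with $|S_i\setminus\bigcup_{j<i}S_j|\le1$ for all $i$. A cell is $C=\{\mathbf x\in\{\pm1\}^d:x_j=z_j,\ j\in J(C)\}$ for some $J(C)\subset[d]$ and signs $z_j$; $f^*|_C$ is the restriction viewed as a function of $x_j$, $j\notin J(C)$. $f^*$ satisfies the stable merged-staircase property if $f^*|_C$ satisfies MSP for every cell $C$. *)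

theory Defs
  imports Complex_Main
begin

(* Points of a Boolean cube with coordinates indexed by a finite set I of naturals:
   x j \<in> {1,-1} for j \<in> I, and x j = 0 outside I (normalisation). *)
definition cube :: "nat set \<Rightarrow> (nat \<Rightarrow> real) set" where
  "cube I = {x. (\<forall>j\<in>I. x j = 1 \<or> x j = -1) \<and> (\<forall>j. j \<notin> I \<longrightarrow> x j = 0)}"

definition chi :: "nat set \<Rightarrow> (nat \<Rightarrow> real) \<Rightarrow> real" where
  "chi S x = (\<Prod>j\<in>S. x j)"

definition msp_sets :: "nat set set \<Rightarrow> bool" where
  "msp_sets F \<longleftrightarrow> (\<exists>Ss. set Ss = F \<and> distinct Ss \<and>
      (\<forall>i<length Ss. card (Ss ! i - \<Union>(set (take i Ss))) \<le> 1))"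

definition msp :: "nat set \<Rightarrow> ((nat \<Rightarrow> real) \<Rightarrow> real) \<Rightarrow> bool" where
  "msp I f \<longleftrightarrow> (\<exists>\<beta> :: nat set \<Rightarrow> real.
      (\<forall>x\<in>cube I. f x = (\<Sum>S\<in>Pow I. \<beta> S * chi S x)) \<and>
      msp_sets {S \<in> Pow I. \<beta> S \<noteq> 0})"

definition is_cell_data :: "nat \<Rightarrow> nat set \<Rightarrow> (nat \<Rightarrow> real) \<Rightarrow> bool" where
  "is_cell_data d J z \<longleftrightarrow> J \<subseteq> {..<d} \<and> (\<forall>j\<in>J. z j = 1 \<or> z j = -1)"

definition cell :: "nat \<Rightarrow> nat set \<Rightarrow> (nat \<Rightarrow> real) \<Rightarrow> (nat \<Rightarrow> real) set" where
  "cell d J z = {x \<in> cube {..<d}. \<forall>j\<in>J. x j = z j}"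

definition restr :: "((nat \<Rightarrow> real) \<Rightarrow> real) \<Rightarrow> nat set \<Rightarrow> (nat \<Rightarrow> real) \<Rightarrow> (nat \<Rightarrow> real) \<Rightarrow> real" where
  "restr f J z = (\<lambda>x. f (\<lambda>j. if j \<in> J then z j else x j))"

definition stable_msp :: "nat \<Rightarrow> ((nat \<Rightarrow> real) \<Rightarrow> real) \<Rightarrow> bool" where
  "stable_msp d f \<longleftrightarrow> (\<forall>J z. is_cell_data d J z \<longrightarrow> msp ({..<d} - J) (restr f J z))"

(* moments under the uniform distribution on a finite set C *)
definition avg :: "(nat \<Rightarrow> real) set \<Rightarrow> ((nat \<Rightarrow> real) \<Rightarrow> real) \<Rightarrow> real" where
  "avg C h = (\<Sum>x\<in>C. h x) / real (card C)"

definition cov :: "(nat \<Rightarrow> real) set \<Rightarrow> ((nat \<Rightarrow> real) \<Rightarrow> real) \<Rightarrow> ((nat \<Rightarrow> real) \<Rightarrow> real) \<Rightarrow> real" where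
  "cov C g h = avg C (\<lambda>x. (g x - avg C g) * (h x - avg C h))"

definition var :: "(nat \<Rightarrow> real) set \<Rightarrow> ((nat \<Rightarrow> real) \<Rightarrow> real) \<Rightarrow> real" where
  "var C g = cov C g g"

definition corr2 :: "(nat \<Rightarrow> real) set \<Rightarrow> ((nat \<Rightarrow> real) \<Rightarrow> real) \<Rightarrow> ((nat \<Rightarrow> real) \<Rightarrow> real) \<Rightarrow> real" where
  "corr2 C g h = (cov C g h)\<^sup>2 / (var C g * var C h)"

definition SID :: "nat \<Rightarrow> ((nat \<Rightarrow> real) \<Rightarrow> real) \<Rightarrow> real \<Rightarrow> bool" where
  "SID d f lam \<longleftrightarrow> (\<forall>J z. is_cell_data d J z \<longrightarrow> var (cell d J z) f > 0 \<longrightarrow>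
      Max ((\<lambda>k. corr2 (cell d J z) f (\<lambda>x. x k)) ` ({..<d} - J)) \<ge> lam)"

end

theory Submission
  imports Defs
begin

lemma cube_val: "x \<in> cube I \<Longrightarrow> j \<in> I \<Longrightarrow> x j = 1 \<or> x j = -1"
  unfolding cube_def by blast

lemma cube_out: "x \<in> cube I \<Longrightarrow> j \<notin> I \<Longrightarrow> x j = 0"
  unfolding cube_def by blast

lemma cube_sq: "x \<in> cube I \<Longrightarrow> j \<in> I \<Longrightarrow> x j * x j = 1"
  using cube_val[of x I j] by auto

lemma cube_empty: "cube {} = {\<lambda>_. 0}"
  unfolding cube_def by auto

lemma cube_insert:
  assumes "i \<notin> I"
  shows "cube (insert i I) = (\<lambda>(s,x). x(i:=s)) ` ({1,-1} \<times> cube I)"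
proof
  show "cube (insert i I) \<subseteq> (\<lambda>(s,x). x(i:=s)) ` ({1,-1} \<times> cube I)"
  proof
    fix y assume y: "y \<in> cube (insert i I)"
    have "y = (\<lambda>(s,x). x(i:=s)) (y i, y(i:=0))" by auto
    moreover have "(y i, y(i:=0)) \<in> {1,-1} \<times> cube I"
      using y assms unfolding cube_def by auto
    ultimately show "y \<in> (\<lambda>(s,x). x(i:=s)) ` ({1,-1} \<times> cube I)" by blast
  qed
  show "(\<lambda>(s,x). x(i:=s)) ` ({1,-1} \<times> cube I) \<subseteq> cube (insert i I)"
    using assms unfolding cube_def by force
qed

lemma inj_cube_insert:
  assumes "i \<notin> I"
  shows "inj_on (\<lambda>(s,x). x(i:=s)) ({1::real,-1} \<times> cube I)"
proof (rule inj_onI, clarify)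
  fix s x t y assume *: "s \<in> {1::real,-1}" "x \<in> cube I" "t \<in> {1::real,-1}" "y \<in> cube I"
    "x(i := s) = y(i := t)"
  have "s = t" using fun_cong[OF *(5), of i] by simp
  moreover have "x = y"
  proof
    fix j show "x j = y j"
      using fun_cong[OF *(5), of j] *(2,4) assms unfolding cube_def
      by (cases "j = i") auto
  qed
  ultimately show "s = t \<and> x = y" by simp
qed

lemma finite_cube: "finite I \<Longrightarrow> finite (cube I)"
proof (induction I rule: finite_induct)
  case empty then show ?case by (simp add: cube_empty)
next
  case (insert i I) then show ?case by (simp add: cube_insert)
qed

lemma sum_cube_prod:
  fixes h :: "nat \<Rightarrow> real \<Rightarrow> real"
  assumes "finite I"
  shows "(\<Sum>x\<in>cube I. \<Prod>j\<in>I. h j (x j)) = (\<Prod>j\<in>I. h j 1 + h j (-1 :: real))"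
  using assms
proof (induction I rule: finite_induct)
  case empty then show ?case by (simp add: cube_empty)
next
  case (insert i I)
  have "(\<Sum>x\<in>cube (insert i I). \<Prod>j\<in>insert i I. h j (x j))
      = (\<Sum>p\<in>{1,-1} \<times> cube I. \<Prod>j\<in>insert i I. h j (((\<lambda>(s,x). x(i:=s)) p) j))"
    unfolding cube_insert[OF insert(2)]
    by (subst sum.reindex[OF inj_cube_insert[OF insert(2)]]) (simp add: comp_def)
  also have "\<dots> = (\<Sum>s\<in>{1,-1}. \<Sum>x\<in>cube I. h i s * (\<Prod>j\<in>I. h j (x j)))"
  proof -
    have "\<And>s x. (\<Prod>j\<in>insert i I. h j ((x(i:=s)) j)) = h i s * (\<Prod>j\<in>I. h j (x j))"
    proof -
      fix s x
      have "(\<Prod>j\<in>I. h j ((x(i:=s)) j)) = (\<Prod>j\<in>I. h j (x j))"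
        by (rule prod.cong) (use insert(2) in auto)
      then show "(\<Prod>j\<in>insert i I. h j ((x(i:=s)) j)) = h i s * (\<Prod>j\<in>I. h j (x j))"
        using insert(1,2) by simp
    qed
    then have "(\<Sum>p\<in>{1,-1} \<times> cube I. \<Prod>j\<in>insert i I. h j (((\<lambda>(s,x). x(i:=s)) p) j))
       = (\<Sum>(s,x)\<in>{1,-1} \<times> cube I. h i s * (\<Prod>j\<in>I. h j (x j)))"
      by (intro sum.cong) auto
    then show ?thesis by (simp only: sum.cartesian_product)
  qed
  also have "\<dots> = (h i 1 + h i (-1)) * (\<Prod>j\<in>I. h j 1 + h j (-1))"
    by (simp only: sum_distrib_left[symmetric] insert.IH) (simp add: algebra_simps)
  also have "\<dots> = (\<Prod>j\<in>insert i I. h j 1 + h j (-1))"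
    using insert(1,2) by simp
  finally show ?case .
qed

lemma card_cube: "finite I \<Longrightarrow> card (cube I) = 2 ^ card I"
proof -
  assume f: "finite I"
  have "real (card (cube I)) = (\<Sum>x\<in>cube I. \<Prod>j\<in>I. (\<lambda>j t. 1::real) j (x j))" by simp
  also have "\<dots> = (\<Prod>j\<in>I. (1::real) + 1)" by (rule sum_cube_prod[OF f])
  also have "\<dots> = (\<Prod>j\<in>I. (2::real))" by simp
  also have "\<dots> = 2 ^ card I" by simp
  finally have "real (card (cube I)) = real (2 ^ card I)" by simp
  then show ?thesis by (simp only: of_nat_eq_iff)
qed


lemma chi_alt:
  assumes "finite I" "S \<subseteq> I"
  shows "chi S x = (\<Prod>j\<in>I. if j \<in> S then x j else 1)"
proof -
  have "(\<Prod>j\<in>I. if j \<in> S then x j else 1) = prod x (I \<inter> S)"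
    using assms(1) by (simp add: prod.inter_restrict)
  also have "I \<inter> S = S" using assms(2) by blast
  finally show ?thesis unfolding chi_def by simp
qed

lemma orth:
  assumes "finite V" "S \<subseteq> V" "T \<subseteq> V"
  shows "(\<Sum>x\<in>cube V. chi S x * chi T x) = (if S = T then 2 ^ card V else 0)"
proof -
  let ?h = "\<lambda>j (t::real). (if j \<in> S then t else 1) * (if j \<in> T then t else 1)"
  have "(\<Sum>x\<in>cube V. chi S x * chi T x) = (\<Sum>x\<in>cube V. \<Prod>j\<in>V. ?h j (x j))"
    by (simp add: chi_alt[OF assms(1,2)] chi_alt[OF assms(1,3)] prod.distrib)
  also have "\<dots> = (\<Prod>j\<in>V. ?h j 1 + ?h j (-1))" by (rule sum_cube_prod[OF assms(1)])
  also have "\<dots> = (\<Prod>j\<in>V. if (j \<in> S) = (j \<in> T) then 2 else 0)"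
    by (intro prod.cong) auto
  also have "\<dots> = (if S = T then 2 ^ card V else 0)"
  proof (cases "S = T")
    case True then show ?thesis by simp
  next
    case False
    then obtain j where "j \<in> V" "(j \<in> S) \<noteq> (j \<in> T)" using assms(2,3) by blast
    then show ?thesis using False assms(1) by (intro trans[OF prod_zero]) auto
  qed
  finally show ?thesis .
qed

lemma orth1:
  assumes "finite V" "T \<subseteq> V"
  shows "(\<Sum>x\<in>cube V. chi T x) = (if T = {} then 2 ^ card V else 0)"
  using orth[OF assms(1) assms(2), of "{}"] by (auto simp: chi_def)

lemma orth2:
  assumes "finite V" "T \<subseteq> V" "k \<in> V"
  shows "(\<Sum>x\<in>cube V. chi T x * x k) = (if T = {k} then 2 ^ card V else 0)"
  using orth[OF assms(1) assms(2), of "{k}"] assms(3) by (auto simp: chi_def)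

definition fc :: "nat set \<Rightarrow> ((nat \<Rightarrow> real) \<Rightarrow> real) \<Rightarrow> nat set \<Rightarrow> real" where
  "fc I g S = (\<Sum>y\<in>cube I. g y * chi S y) / 2 ^ card I"

lemma kernel:
  assumes "finite I" "x \<in> cube I" "y \<in> cube I"
  shows "(\<Sum>S\<in>Pow I. chi S y * chi S x) = (if y = x then 2 ^ card I else 0)"
proof -
  have "(\<Sum>S\<in>Pow I. chi S y * chi S x) = (\<Sum>S\<in>Pow I. (\<Prod>j\<in>S. y j * x j) * (\<Prod>j\<in>I - S. 1))"
    by (simp add: chi_def prod.distrib)
  also have "\<dots> = (\<Prod>j\<in>I. y j * x j + 1)" by (rule prod_add[OF assms(1), symmetric])
  also have "\<dots> = (if y = x then 2 ^ card I else 0)"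
  proof (cases "y = x")
    case True
    have "(\<Prod>j\<in>I. y j * x j + 1) = (\<Prod>j\<in>I. 2)"
      using assms(2) True unfolding cube_def by (intro prod.cong) auto
    then show ?thesis using True by simp
  next
    case False
    then obtain j where j: "y j \<noteq> x j" by auto
    then have "j \<in> I" using assms(2,3) unfolding cube_def by (metis (mono_tags, lifting) mem_Collect_eq)
    moreover have "y j * x j + 1 = 0"
      using j cube_val[OF assms(2) \<open>j \<in> I\<close>] cube_val[OF assms(3) \<open>j \<in> I\<close>] by auto
    ultimately show ?thesis using False assms(1) by (intro trans[OF prod_zero]) auto
  qed
  finally show ?thesis .
qed

lemma expansion:
  assumes "finite I" "x \<in> cube I"
  shows "g x = (\<Sum>S\<in>Pow I. fc I g S * chi S x)"
proof -
  have "(\<Sum>S\<in>Pow I. fc I g S * chi S x)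
      = (\<Sum>S\<in>Pow I. \<Sum>y\<in>cube I. g y * (chi S y * chi S x)) / 2 ^ card I"
    unfolding fc_def by (simp add: sum_divide_distrib sum_distrib_right mult.assoc)
  also have "\<dots> = (\<Sum>y\<in>cube I. g y * (\<Sum>S\<in>Pow I. chi S y * chi S x)) / 2 ^ card I"
    by (subst sum.swap) (simp add: sum_distrib_left)
  also have "\<dots> = (\<Sum>y\<in>cube I. if y = x then g x * 2 ^ card I else 0) / 2 ^ card I"
    by (intro arg_cong2[where f="(/)"] sum.cong refl) (auto simp: kernel[OF assms(1,2)])
  also have "\<dots> = g x"
    using assms finite_cube[OF assms(1)] by simp
  finally show ?thesis by simp
qed


definition padd :: "(nat \<Rightarrow> real) \<Rightarrow> (nat \<Rightarrow> real) \<Rightarrow> (nat \<Rightarrow> real)" where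
  "padd w x = (\<lambda>j. w j + x j)"

lemma padd_image:
  assumes "U \<inter> V = {}"
  shows "(\<lambda>(w,x). padd w x) ` (cube U \<times> cube V) = cube (U \<union> V)"
proof
  show "(\<lambda>(w,x). padd w x) ` (cube U \<times> cube V) \<subseteq> cube (U \<union> V)"
  proof clarify
    fix w x assume w: "w \<in> cube U" and x: "x \<in> cube V"
    show "padd w x \<in> cube (U \<union> V)"
      unfolding cube_def padd_def
    proof (intro CollectI conjI allI ballI impI)
      fix j assume "j \<in> U \<union> V"
      then show "w j + x j = 1 \<or> w j + x j = -1"
      proof
        assume j: "j \<in> U"
        then have "x j = 0" using assms cube_out[OF x, of j] by blast
        then show ?thesis using cube_val[OF w j] by auto
      next
        assume j: "j \<in> V"
        then have "w j = 0" using assms cube_out[OF w, of j] by blast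
        then show ?thesis using cube_val[OF x j] by auto
      qed
    next
      fix j assume "j \<notin> U \<union> V"
      then show "w j + x j = 0" using cube_out[OF x, of j] cube_out[OF w, of j] by auto
    qed
  qed
  show "cube (U \<union> V) \<subseteq> (\<lambda>(w,x). padd w x) ` (cube U \<times> cube V)"
  proof
    fix y assume y: "y \<in> cube (U \<union> V)"
    define w where "w = (\<lambda>j. if j \<in> U then y j else 0)"
    define x where "x = (\<lambda>j. if j \<in> V then y j else 0)"
    have "w \<in> cube U" using y unfolding w_def cube_def by auto
    moreover have "x \<in> cube V" using y unfolding x_def cube_def by auto
    moreover have "y = padd w x"
    proof
      fix j show "y j = padd w x j"
        using assms cube_out[OF y, of j] unfolding padd_def w_def x_def by auto
    qed
    ultimately show "y \<in> (\<lambda>(w,x). padd w x) ` (cube U \<times> cube V)" by blast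
  qed
qed

lemma padd_inj:
  assumes "U \<inter> V = {}"
  shows "inj_on (\<lambda>(w,x). padd w x) (cube U \<times> cube V)"
proof (rule inj_onI, clarify)
  fix w x w' x' assume *: "w \<in> cube U" "x \<in> cube V" "w' \<in> cube U" "x' \<in> cube V"
    "padd w x = padd w' x'"
  have e: "\<And>j. w j + x j = w' j + x' j" using fun_cong[OF *(5)] unfolding padd_def by simp
  have "w = w'"
  proof
    fix j show "w j = w' j"
    proof (cases "j \<in> U")
      case True then have "j \<notin> V" using assms by blast
      then show ?thesis using e[of j] cube_out[OF *(2)] cube_out[OF *(4)] by simp
    next
      case False then show ?thesis using cube_out[OF *(1)] cube_out[OF *(3)] by simp
    qed
  qed
  moreover have "x = x'"
  proof
    fix j show "x j = x' j" using e[of j] \<open>w = w'\<close> by simp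
  qed
  ultimately show "w = w' \<and> x = x'" by simp
qed

lemma sum_cube_split:
  assumes "U \<inter> V = {}"
  shows "(\<Sum>y\<in>cube (U \<union> V). F y) = (\<Sum>w\<in>cube U. \<Sum>x\<in>cube V. F (padd w x))"
proof -
  have "(\<Sum>y\<in>cube (U \<union> V). F y) = (\<Sum>p\<in>cube U \<times> cube V. F ((\<lambda>(w,x). padd w x) p))"
    unfolding padd_image[OF assms, symmetric]
    by (subst sum.reindex[OF padd_inj[OF assms]]) (simp add: comp_def)
  also have "\<dots> = (\<Sum>(w,x)\<in>cube U \<times> cube V. F (padd w x))"
    by (simp add: case_prod_beta)
  also have "\<dots> = (\<Sum>w\<in>cube U. \<Sum>x\<in>cube V. F (padd w x))"
    by (simp only: sum.cartesian_product)
  finally show ?thesis .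
qed

lemma chi_padd:
  assumes "U \<inter> V = {}" "S \<subseteq> U \<union> V" "finite S" "w \<in> cube U" "x \<in> cube V"
  shows "chi S (padd w x) = chi (S \<inter> U) w * chi (S \<inter> V) x"
proof -
  have "S = (S \<inter> U) \<union> (S \<inter> V)" using assms(2) by blast
  then have "chi S (padd w x) = prod (padd w x) (S \<inter> U) * prod (padd w x) (S \<inter> V)"
    unfolding chi_def using assms(1,3)
    by (metis finite_Int inf_assoc inf_bot_right inf_commute prod.union_disjoint)
  also have "prod (padd w x) (S \<inter> U) = chi (S \<inter> U) w"
    unfolding chi_def padd_def using assms(1) cube_out[OF assms(5)] by (intro prod.cong) auto
  also have "prod (padd w x) (S \<inter> V) = chi (S \<inter> V) x"
    unfolding chi_def padd_def using assms(1) cube_out[OF assms(4)] by (intro prod.cong) auto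
  finally show ?thesis .
qed


definition emb :: "nat set \<Rightarrow> (nat \<Rightarrow> real) \<Rightarrow> (nat \<Rightarrow> real) \<Rightarrow> (nat \<Rightarrow> real)" where
  "emb J z x = (\<lambda>j. if j \<in> J then z j else x j)"

lemma restr_emb: "restr f J z x = f (emb J z x)"
  unfolding restr_def emb_def by simp

lemma cell_bij:
  assumes "is_cell_data d J z"
  shows "bij_betw (emb J z) (cube ({..<d} - J)) (cell d J z)"
proof -
  have J: "J \<subseteq> {..<d}" and z: "\<And>j. j \<in> J \<Longrightarrow> z j = 1 \<or> z j = -1"
    using assms unfolding is_cell_data_def by auto
  show ?thesis
  proof (rule bij_betw_imageI)
    show "inj_on (emb J z) (cube ({..<d} - J))"
    proof (rule inj_onI)
      fix x y assume x: "x \<in> cube ({..<d} - J)" and y: "y \<in> cube ({..<d} - J)"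
        and e: "emb J z x = emb J z y"
      show "x = y"
      proof
        fix j show "x j = y j"
          using fun_cong[OF e, of j] cube_out[OF x, of j] cube_out[OF y, of j]
          unfolding emb_def by (cases "j \<in> J") auto
      qed
    qed
    show "emb J z ` cube ({..<d} - J) = cell d J z"
    proof
      show "emb J z ` cube ({..<d} - J) \<subseteq> cell d J z"
      proof clarify
        fix x assume x: "x \<in> cube ({..<d} - J)"
        have "emb J z x \<in> cube {..<d}"
          unfolding cube_def
        proof (intro CollectI conjI allI ballI impI)
          fix j assume "j \<in> {..<d}"
          then show "emb J z x j = 1 \<or> emb J z x j = -1"
            using z[of j] cube_val[OF x, of j] unfolding emb_def by (cases "j \<in> J") auto
        next
          fix j assume "j \<notin> {..<d}"
          then show "emb J z x j = 0" using J cube_out[OF x, of j] unfolding emb_def by auto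
        qed
        then show "emb J z x \<in> cell d J z" unfolding cell_def emb_def by auto
      qed
      show "cell d J z \<subseteq> emb J z ` cube ({..<d} - J)"
      proof
        fix c assume c: "c \<in> cell d J z"
        then have c1: "c \<in> cube {..<d}" and c2: "\<And>j. j \<in> J \<Longrightarrow> c j = z j"
          unfolding cell_def by auto
        define x where "x = (\<lambda>j. if j \<in> J then 0 else c j)"
        have "x \<in> cube ({..<d} - J)"
          unfolding cube_def x_def using c1 cube_val[OF c1] cube_out[OF c1] by auto
        moreover have "c = emb J z x"
          unfolding emb_def x_def using c2 by auto
        ultimately show "c \<in> emb J z ` cube ({..<d} - J)" by blast
      qed
    qed
  qed
qed

lemma sum_cell:
  assumes "is_cell_data d J z"
  shows "(\<Sum>c\<in>cell d J z. h c) = (\<Sum>x\<in>cube ({..<d} - J). h (emb J z x))"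
  using sum.reindex_bij_betw[OF cell_bij[OF assms], of h] by simp

lemma cell_finite_ne:
  assumes "is_cell_data d J z"
  shows "finite (cell d J z)" "cell d J z \<noteq> {}"
proof -
  have f: "finite (cube ({..<d} - J))" by (rule finite_cube) simp
  have "card (cube ({..<d} - J)) > 0" by (simp add: card_cube)
  then have ne: "cube ({..<d} - J) \<noteq> {}" by auto
  show "finite (cell d J z)" using bij_betw_finite[OF cell_bij[OF assms]] f by simp
  show "cell d J z \<noteq> {}" using bij_betw_imp_surj_on[OF cell_bij[OF assms]] ne by auto
qed

lemma vv: "var C f = avg C (\<lambda>x. (f x - avg C f) * (f x - avg C f))"
  unfolding var_def cov_def ..

lemma vv2: "var C f = (\<Sum>x\<in>C. (f x - avg C f) * (f x - avg C f)) / real (card C)"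
  unfolding vv by (rule avg_def)

lemma var_pos_iff:
  assumes "finite C" "C \<noteq> {}"
  shows "var C f > 0 \<longleftrightarrow> (\<exists>a\<in>C. \<exists>b\<in>C. f a \<noteq> f b)"
proof -
  let ?m = "avg C f"
  have v: "var C f = (\<Sum>x\<in>C. (f x - ?m) * (f x - ?m)) / real (card C)"
    by (rule vv2)
  have cpos: "real (card C) > 0" using assms by (simp add: card_gt_0_iff)
  have nn: "\<And>x. x \<in> C \<Longrightarrow> 0 \<le> (f x - ?m) * (f x - ?m)" by simp
  have z: "(\<Sum>x\<in>C. (f x - ?m) * (f x - ?m)) = 0 \<longleftrightarrow> (\<forall>x\<in>C. (f x - ?m) * (f x - ?m) = 0)"
    by (rule sum_nonneg_eq_0_iff[OF assms(1) nn])
  show ?thesis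
  proof
    assume "var C f > 0"
    then have "(\<Sum>x\<in>C. (f x - ?m) * (f x - ?m)) \<noteq> 0" using v by auto
    then obtain a where a: "a \<in> C" "(f a - ?m) * (f a - ?m) \<noteq> 0"
      using z by blast
    show "\<exists>a\<in>C. \<exists>b\<in>C. f a \<noteq> f b"
    proof (rule ccontr)
      assume "\<not> ?thesis"
      then have "\<forall>b\<in>C. f b = f a" using a(1) by blast
      then have "(\<Sum>x\<in>C. f x) = (\<Sum>x\<in>C. f a)" by (intro sum.cong refl) blast
      then have "?m = f a" unfolding avg_def using cpos by simp
      then show False using a(2) by simp
    qed
  next
    assume "\<exists>a\<in>C. \<exists>b\<in>C. f a \<noteq> f b"
    then obtain a b where ab: "a \<in> C" "b \<in> C" "f a \<noteq> f b" by auto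
    have "(\<Sum>x\<in>C. (f x - ?m) * (f x - ?m)) \<noteq> 0"
    proof
      assume "(\<Sum>x\<in>C. (f x - ?m) * (f x - ?m)) = 0"
      then have "\<forall>x\<in>C. (f x - ?m) * (f x - ?m) = 0"
        using z by blast
      then have "f a = ?m" "f b = ?m" using ab(1,2) by auto
      then show False using ab(3) by simp
    qed
    moreover have "(\<Sum>x\<in>C. (f x - ?m) * (f x - ?m)) \<ge> 0" by (intro sum_nonneg) simp
    ultimately show "var C f > 0" using v cpos by simp
  qed
qed

lemma corr_pos_iff:
  assumes "finite C" "C \<noteq> {}" "\<forall>c\<in>C. h c = 1 \<or> h c = -1" "(\<Sum>c\<in>C. h c) = 0"
    "var C f > 0"
  shows "corr2 C f h > 0 \<longleftrightarrow> (\<Sum>c\<in>C. f c * h c) \<noteq> 0"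
proof -
  have cpos: "real (card C) > 0" using assms by (simp add: card_gt_0_iff)
  have ah: "avg C h = 0" unfolding avg_def using assms(4) by simp
  have "(\<Sum>c\<in>C. h c * h c) = (\<Sum>c\<in>C. 1)" using assms(3) by (intro sum.cong) auto
  then have vh: "var C h = 1" unfolding var_def cov_def ah avg_def[of C "\<lambda>x. (h x - 0) * (h x - 0)"] using cpos by simp
  have "cov C f h = avg C (\<lambda>x. (f x - avg C f) * h x)"
    unfolding cov_def ah by simp
  also have "\<dots> = (\<Sum>c\<in>C. (f c - avg C f) * h c) / real (card C)"
    by (rule avg_def)
  also have "\<dots> = (\<Sum>c\<in>C. f c * h c - avg C f * h c) / real (card C)"
    by (simp only: left_diff_distrib)
  also have "\<dots> = (\<Sum>c\<in>C. f c * h c) / real (card C)"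
    by (simp only: sum_subtractf sum_distrib_left[symmetric] assms(4) mult_zero_right diff_zero)
  finally have cv: "cov C f h = (\<Sum>c\<in>C. f c * h c) / real (card C)" .
  have cr: "corr2 C f h = (cov C f h)\<^sup>2 / var C f" unfolding corr2_def vh by simp
  have e1: "cov C f h \<noteq> 0 \<longleftrightarrow> (\<Sum>c\<in>C. f c * h c) \<noteq> 0" using cv cpos by simp
  have "corr2 C f h > 0 \<longleftrightarrow> (cov C f h)\<^sup>2 > 0"
    unfolding cr using assms(5) by (simp only: zero_less_divide_iff) auto
  then show ?thesis using e1 by simp
qed


lemma msp_singleton:
  assumes "finite I" "F \<subseteq> Pow I" "msp_sets F" "S \<in> F" "S \<noteq> {}"
  shows "\<exists>k. {k} \<in> F"
proof -
  obtain Ss where Ss: "set Ss = F" "distinct Ss"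
    "\<And>i. i < length Ss \<Longrightarrow> card (Ss ! i - \<Union>(set (take i Ss))) \<le> 1"
    using assms(3) unfolding msp_sets_def by blast
  have ex: "\<exists>i. i < length Ss \<and> Ss ! i \<noteq> {}"
    using assms(4,5) Ss(1) by (metis in_set_conv_nth)
  define i where "i = (LEAST i. i < length Ss \<and> Ss ! i \<noteq> {})"
  have i: "i < length Ss" "Ss ! i \<noteq> {}" using LeastI_ex[OF ex] unfolding i_def by auto
  have lt: "\<And>j. j < i \<Longrightarrow> Ss ! j = {}"
  proof -
    fix j assume "j < i"
    then have "\<not> (j < length Ss \<and> Ss ! j \<noteq> {})" using not_less_Least unfolding i_def by blast
    then show "Ss ! j = {}" using \<open>j < i\<close> i(1) by auto
  qed
  have "\<Union>(set (take i Ss)) = {}"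
  proof -
    have "\<forall>T\<in>set (take i Ss). T = {}"
    proof
      fix T assume "T \<in> set (take i Ss)"
      then obtain j where "j < length (take i Ss)" "take i Ss ! j = T" by (metis in_set_conv_nth)
      then show "T = {}" using lt by auto
    qed
    then show ?thesis by auto
  qed
  then have e: "Ss ! i - \<Union>(set (take i Ss)) = Ss ! i" by (simp only: Diff_empty)
  have c: "card (Ss ! i) \<le> 1" using Ss(3)[OF i(1)] unfolding e .
  have "Ss ! i \<in> F" using Ss(1) i(1) by auto
  then have "finite (Ss ! i)" using assms(1,2) finite_subset by blast
  then have "card (Ss ! i) = 1" using c i(2) by (simp add: card_gt_0_iff le_antisym Suc_leI)
  then obtain k where "Ss ! i = {k}" by (meson card_1_singletonE)
  then show ?thesis using \<open>Ss ! i \<in> F\<close> by metis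
qed

definition valid_st :: "nat set set \<Rightarrow> nat set list \<Rightarrow> bool" where
  "valid_st F Ss \<longleftrightarrow> set Ss \<subseteq> F \<and> distinct Ss \<and>
     (\<forall>i<length Ss. card (Ss ! i - \<Union>(set (take i Ss))) \<le> 1)"

lemma valid_snoc:
  assumes "valid_st F Ss" "S \<in> F" "S \<notin> set Ss" "card (S - \<Union>(set Ss)) \<le> 1"
  shows "valid_st F (Ss @ [S])"
  unfolding valid_st_def
proof (intro conjI allI impI)
  show "set (Ss @ [S]) \<subseteq> F" using assms(1,2) unfolding valid_st_def by auto
  show "distinct (Ss @ [S])" using assms(1,3) unfolding valid_st_def by auto
  fix i assume "i < length (Ss @ [S])"
  then have "i < length Ss \<or> i = length Ss" by auto
  then show "card ((Ss @ [S]) ! i - \<Union>(set (take i (Ss @ [S])))) \<le> 1"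
  proof
    assume "i < length Ss"
    then show ?thesis using assms(1) unfolding valid_st_def by (simp add: nth_append)
  next
    assume "i = length Ss"
    then show ?thesis using assms(4) by simp
  qed
qed

lemma greedy:
  assumes "finite F" "\<not> msp_sets F"
  shows "\<exists>U. U \<subseteq> \<Union>F \<and> (\<forall>S\<in>F. \<forall>k. S - U \<noteq> {k}) \<and> (\<exists>S\<in>F. \<not> S \<subseteq> U)"
proof -
  have v0: "valid_st F []" unfolding valid_st_def by simp
  have bnd: "\<forall>Ss. valid_st F Ss \<longrightarrow> length Ss < card F + 1"
  proof (intro allI impI)
    fix Ss assume "valid_st F Ss"
    then have "set Ss \<subseteq> F" "distinct Ss" unfolding valid_st_def by auto
    then have "length Ss \<le> card F" using assms(1) by (metis card_mono distinct_card)
    then show "length Ss < card F + 1" by simp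
  qed
  obtain Ss where Ss: "valid_st F Ss" and mx: "\<And>Ts. valid_st F Ts \<Longrightarrow> length Ts \<le> length Ss"
    using ex_has_greatest_nat[OF v0 bnd] by blast
  define U where "U = \<Union>(set Ss)"
  have sub: "set Ss \<subseteq> F" using Ss unfolding valid_st_def by auto
  have big: "\<And>S. S \<in> F \<Longrightarrow> S \<notin> set Ss \<Longrightarrow> \<not> card (S - U) \<le> 1"
  proof
    fix S assume "S \<in> F" "S \<notin> set Ss" "card (S - U) \<le> 1"
    then have "valid_st F (Ss @ [S])" using valid_snoc[OF Ss] unfolding U_def by blast
    then show False using mx by fastforce
  qed
  have "set Ss \<noteq> F"
  proof
    assume "set Ss = F"
    then have "msp_sets F" using Ss unfolding valid_st_def msp_sets_def by blast
    then show False using assms(2) by simp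
  qed
  then obtain S0 where S0: "S0 \<in> F" "S0 \<notin> set Ss" using sub by blast
  have "\<not> S0 \<subseteq> U"
  proof
    assume "S0 \<subseteq> U" then have "S0 - U = {}" by blast
    then have "card (S0 - U) \<le> 1" by (simp only: card.empty)
    then show False using big[OF S0] by blast
  qed
  moreover have "\<forall>S\<in>F. \<forall>k. S - U \<noteq> {k}"
  proof (intro ballI allI)
    fix S k assume S: "S \<in> F"
    show "S - U \<noteq> {k}"
    proof (cases "S \<in> set Ss")
      case True then have "S - U = {}" unfolding U_def by blast
      then show ?thesis by blast
    next
      case False then show ?thesis using big[OF S] by auto
    qed
  qed
  moreover have "U \<subseteq> \<Union>F" using sub unfolding U_def by blast
  ultimately show ?thesis using S0(1) by blast
qed


lemma var_cell_iff:
  assumes "is_cell_data d J z"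
  shows "var (cell d J z) f > 0 \<longleftrightarrow>
    (\<exists>x\<in>cube ({..<d} - J). \<exists>y\<in>cube ({..<d} - J). restr f J z x \<noteq> restr f J z y)"
proof -
  have im: "cell d J z = emb J z ` cube ({..<d} - J)"
    using bij_betw_imp_surj_on[OF cell_bij[OF assms]] by simp
  show ?thesis
    unfolding var_pos_iff[OF cell_finite_ne[OF assms]] restr_emb
    by (subst im)+ blast
qed

lemma corr_cell_iff:
  assumes "is_cell_data d J z" "var (cell d J z) f > 0" "k \<in> {..<d} - J"
  shows "corr2 (cell d J z) f (\<lambda>x. x k) > 0 \<longleftrightarrow>
    (\<Sum>x\<in>cube ({..<d} - J). restr f J z x * x k) \<noteq> 0"
proof -
  have ek: "\<And>x. emb J z x k = x k" using assms(3) unfolding emb_def by auto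
  have pm: "\<forall>c\<in>cell d J z. c k = 1 \<or> c k = -1"
    using assms(3) unfolding cell_def by (auto dest: cube_val)
  have "(\<Sum>c\<in>cell d J z. c k) = (\<Sum>x\<in>cube ({..<d} - J). x k)"
    using sum_cell[OF assms(1), of "\<lambda>c. c k"] ek by simp
  also have "\<dots> = (\<Sum>x\<in>cube ({..<d} - J). chi {} x * x k)" by (simp add: chi_def)
  also have "\<dots> = 0" using orth2[of "{..<d} - J" "{}" k] assms(3) by simp
  finally have s0: "(\<Sum>c\<in>cell d J z. c k) = 0" .
  have "(\<Sum>c\<in>cell d J z. f c * c k) = (\<Sum>x\<in>cube ({..<d} - J). restr f J z x * x k)"
    using sum_cell[OF assms(1), of "\<lambda>c. f c * c k"] ek by (simp add: restr_emb)
  then show ?thesis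
    using corr_pos_iff[OF cell_finite_ne[OF assms(1)] pm s0 assms(2)] by simp
qed

lemma sum_singleton_coeff:
  assumes "finite I" "k \<in> I" "\<forall>x\<in>cube I. g x = (\<Sum>S\<in>Pow I. \<beta> S * chi S x)"
  shows "(\<Sum>x\<in>cube I. g x * x k) = \<beta> {k} * 2 ^ card I"
proof -
  have "(\<Sum>x\<in>cube I. g x * x k) = (\<Sum>x\<in>cube I. \<Sum>S\<in>Pow I. \<beta> S * (chi S x * x k))"
    using assms(3) by (intro sum.cong refl) (simp add: sum_distrib_right mult.assoc)
  also have "\<dots> = (\<Sum>S\<in>Pow I. \<beta> S * (\<Sum>x\<in>cube I. chi S x * x k))"
    by (subst sum.swap) (simp add: sum_distrib_left)
  also have "\<dots> = (\<Sum>S\<in>Pow I. if S = {k} then \<beta> {k} * 2 ^ card I else 0)"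
    using orth2[OF assms(1) _ assms(2)] by (intro sum.cong refl) auto
  also have "\<dots> = \<beta> {k} * 2 ^ card I" using assms(1,2) by (simp add: sum.delta)
  finally show ?thesis .
qed

lemma const_if_no_coeff:
  assumes "finite I" "\<forall>x\<in>cube I. g x = (\<Sum>S\<in>Pow I. \<beta> S * chi S x)"
    "\<forall>S\<in>Pow I. S \<noteq> {} \<longrightarrow> \<beta> S = 0" "x \<in> cube I"
  shows "g x = \<beta> {}"
proof -
  have "g x = (\<Sum>S\<in>Pow I. if S = {} then \<beta> {} else 0)"
    using assms(2-) by (auto intro!: sum.cong simp: chi_def)
  also have "\<dots> = \<beta> {}" using assms(1) by (simp add: sum.delta)
  finally show ?thesis .
qed

lemma dir1_pos:
  assumes "stable_msp d f" "is_cell_data d J z" "var (cell d J z) f > 0"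
  shows "Max ((\<lambda>k. corr2 (cell d J z) f (\<lambda>x. x k)) ` ({..<d} - J)) > 0"
proof -
  let ?I = "{..<d} - J"
  let ?g = "restr f J z"
  have fI: "finite ?I" by simp
  obtain \<beta> where ex: "\<forall>x\<in>cube ?I. ?g x = (\<Sum>S\<in>Pow ?I. \<beta> S * chi S x)"
    and ms: "msp_sets {S \<in> Pow ?I. \<beta> S \<noteq> 0}"
    using assms(1,2) unfolding stable_msp_def msp_def by blast
  obtain x y where xy: "x \<in> cube ?I" "y \<in> cube ?I" "?g x \<noteq> ?g y"
    using var_cell_iff[OF assms(2)] assms(3) by blast
  have "\<exists>S\<in>Pow ?I. S \<noteq> {} \<and> \<beta> S \<noteq> 0"
  proof (rule ccontr)
    assume "\<not> ?thesis"
    then have "\<forall>S\<in>Pow ?I. S \<noteq> {} \<longrightarrow> \<beta> S = 0" by blast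
    then show False using const_if_no_coeff[OF fI ex] xy by metis
  qed
  then obtain S where "S \<in> {S \<in> Pow ?I. \<beta> S \<noteq> 0}" "S \<noteq> {}" by blast
  then obtain k where k: "{k} \<in> {S \<in> Pow ?I. \<beta> S \<noteq> 0}"
    using msp_singleton[OF fI _ ms] by blast
  then have kI: "k \<in> ?I" and bk: "\<beta> {k} \<noteq> 0" by auto
  have "(\<Sum>x\<in>cube ?I. ?g x * x k) \<noteq> 0"
    using sum_singleton_coeff[OF fI kI ex] bk by simp
  then have pos: "corr2 (cell d J z) f (\<lambda>x. x k) > 0"
    using corr_cell_iff[OF assms(2,3) kI] by simp
  have "corr2 (cell d J z) f (\<lambda>x. x k) \<le> Max ((\<lambda>k. corr2 (cell d J z) f (\<lambda>x. x k)) ` ?I)"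
    using kI by (intro Max_ge) auto
  then show ?thesis using pos by linarith
qed


lemma padd_in:
  assumes "U \<inter> V = {}" "w \<in> cube U" "x \<in> cube V"
  shows "padd w x \<in> cube (U \<union> V)"
  using padd_image[OF assms(1)] assms(2,3) by blast

lemma part_a:
  assumes "finite I" "U \<subseteq> I" "w \<in> cube U" "k \<in> I - U"
    "\<forall>y\<in>cube I. g y = (\<Sum>S\<in>Pow I. \<beta> S * chi S y)"
    "\<forall>S\<in>Pow I. \<beta> S \<noteq> 0 \<longrightarrow> (\<forall>k. S - U \<noteq> {k})"
  shows "(\<Sum>x\<in>cube (I - U). g (padd w x) * x k) = 0"
proof -
  let ?V = "I - U"
  have d: "U \<inter> ?V = {}" by blast
  have uv: "U \<union> ?V = I" using assms(2) by blast
  have fV: "finite ?V" using assms(1) by simp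
  have "(\<Sum>x\<in>cube ?V. g (padd w x) * x k)
      = (\<Sum>x\<in>cube ?V. \<Sum>S\<in>Pow I. \<beta> S * chi (S \<inter> U) w * (chi (S \<inter> ?V) x * x k))"
  proof (intro sum.cong refl)
    fix x assume x: "x \<in> cube ?V"
    have pi: "padd w x \<in> cube I" using padd_in[OF d assms(3) x] uv by simp
    have "g (padd w x) = (\<Sum>S\<in>Pow I. \<beta> S * chi S (padd w x))" using assms(5) pi by blast
    also have "\<dots> = (\<Sum>S\<in>Pow I. \<beta> S * (chi (S \<inter> U) w * chi (S \<inter> ?V) x))"
    proof (intro sum.cong refl)
      fix S assume "S \<in> Pow I"
      then have "S \<subseteq> U \<union> ?V" "finite S" using uv assms(1) finite_subset by auto
      then show "\<beta> S * chi S (padd w x) = \<beta> S * (chi (S \<inter> U) w * chi (S \<inter> ?V) x)"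
        using chi_padd[OF d _ _ assms(3) x] by simp
    qed
    finally show "g (padd w x) * x k = (\<Sum>S\<in>Pow I. \<beta> S * chi (S \<inter> U) w * (chi (S \<inter> ?V) x * x k))"
      by (simp add: sum_distrib_right mult.assoc)
  qed
  also have "\<dots> = (\<Sum>S\<in>Pow I. \<beta> S * chi (S \<inter> U) w * (\<Sum>x\<in>cube ?V. chi (S \<inter> ?V) x * x k))"
    by (subst sum.swap) (simp add: sum_distrib_left)
  also have "\<dots> = (\<Sum>S\<in>Pow I. 0)"
  proof (intro sum.cong refl)
    fix S assume S: "S \<in> Pow I"
    have o: "(\<Sum>x\<in>cube ?V. chi (S \<inter> ?V) x * x k) = (if S \<inter> ?V = {k} then 2 ^ card ?V else 0)"
      by (rule orth2[OF fV _ assms(4)]) blast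
    have "S \<inter> ?V = S - U" using S by blast
    then show "\<beta> S * chi (S \<inter> U) w * (\<Sum>x\<in>cube ?V. chi (S \<inter> ?V) x * x k) = 0"
      using assms(6) S o by (cases "\<beta> S = 0") auto
  qed
  finally show ?thesis by simp
qed

lemma part_b:
  assumes "finite I" "U \<subseteq> I" "S0 \<subseteq> I" "S0 \<inter> (I - U) \<noteq> {}"
    "\<forall>w\<in>cube U. \<forall>x\<in>cube (I - U). \<forall>y\<in>cube (I - U). g (padd w x) = g (padd w y)"
  shows "fc I g S0 = 0"
proof -
  let ?V = "I - U"
  have d: "U \<inter> ?V = {}" by blast
  have uv: "U \<union> ?V = I" using assms(2) by blast
  have fV: "finite ?V" using assms(1) by simp
  define x0 where "x0 = (\<lambda>j. if j \<in> ?V then 1 else (0::real))"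
  have x0: "x0 \<in> cube ?V" unfolding x0_def cube_def by auto
  have fS: "finite S0" using assms(1,3) finite_subset by blast
  have s0: "S0 \<subseteq> U \<union> ?V" using uv assms(3) by simp
  have "(\<Sum>y\<in>cube I. g y * chi S0 y) = (\<Sum>y\<in>cube (U \<union> ?V). g y * chi S0 y)" using uv by simp
  also have "\<dots> = (\<Sum>w\<in>cube U. \<Sum>x\<in>cube ?V. g (padd w x) * chi S0 (padd w x))"
    by (rule sum_cube_split[OF d])
  also have "\<dots> = (\<Sum>w\<in>cube U. g (padd w x0) * chi (S0 \<inter> U) w * (\<Sum>x\<in>cube ?V. chi (S0 \<inter> ?V) x))"
  proof (intro sum.cong refl)
    fix w assume w: "w \<in> cube U"
    have "(\<Sum>x\<in>cube ?V. g (padd w x) * chi S0 (padd w x))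
        = (\<Sum>x\<in>cube ?V. g (padd w x0) * chi (S0 \<inter> U) w * chi (S0 \<inter> ?V) x)"
    proof (intro sum.cong refl)
      fix x assume x: "x \<in> cube ?V"
      show "g (padd w x) * chi S0 (padd w x) = g (padd w x0) * chi (S0 \<inter> U) w * chi (S0 \<inter> ?V) x"
      proof -
        have "g (padd w x) = g (padd w x0)" using assms(5) w x x0 by blast
        then show ?thesis using chi_padd[OF d s0 fS w x] by simp
      qed
    qed
    then show "(\<Sum>x\<in>cube ?V. g (padd w x) * chi S0 (padd w x))
        = g (padd w x0) * chi (S0 \<inter> U) w * (\<Sum>x\<in>cube ?V. chi (S0 \<inter> ?V) x)"
      by (simp add: sum_distrib_left)
  qed
  also have "\<dots> = 0" using orth1[OF fV, of "S0 \<inter> ?V"] assms(4) by simp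
  finally show ?thesis unfolding fc_def by simp
qed

lemma restr_padd:
  assumes "U \<subseteq> {..<d} - J" "w \<in> cube U" "x \<in> cube ({..<d} - J - U)"
  shows "restr f (J \<union> U) (\<lambda>j. if j \<in> J then z j else w j) x = restr f J z (padd w x)"
proof -
  have "(\<lambda>j. if j \<in> J \<union> U then (if j \<in> J then z j else w j) else x j)
      = (\<lambda>j. if j \<in> J then z j else padd w x j)"
  proof
    fix j
    show "(if j \<in> J \<union> U then (if j \<in> J then z j else w j) else x j)
        = (if j \<in> J then z j else padd w x j)"
      using assms cube_out[OF assms(2), of j] cube_out[OF assms(3), of j] unfolding padd_def
      by auto
  qed
  then show ?thesis unfolding restr_def by simp
qed


lemma dir2:
  assumes lam: "lam > 0" and sid: "SID d f lam"
  shows "stable_msp d f"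
  unfolding stable_msp_def
proof (intro allI impI)
  fix J z assume cd: "is_cell_data d J z"
  let ?I = "{..<d} - J"
  let ?g = "restr f J z"
  let ?F = "{S \<in> Pow ?I. fc ?I ?g S \<noteq> 0}"
  have fI: "finite ?I" by simp
  have ex: "\<forall>x\<in>cube ?I. ?g x = (\<Sum>S\<in>Pow ?I. fc ?I ?g S * chi S x)"
    using expansion[OF fI] by blast
  have "msp_sets ?F"
  proof (rule ccontr)
    assume nm: "\<not> msp_sets ?F"
    have fF: "finite ?F" by simp
    obtain U where U: "U \<subseteq> \<Union>?F" "\<forall>S\<in>?F. \<forall>k. S - U \<noteq> {k}" "\<exists>S\<in>?F. \<not> S \<subseteq> U"
      using greedy[OF fF nm] by blast
    have UI: "U \<subseteq> ?I" using U(1) by blast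
    let ?V = "?I - U"
    obtain S0 where S0: "S0 \<in> ?F" "\<not> S0 \<subseteq> U" using U(3) by blast
    have S0V: "S0 \<inter> ?V \<noteq> {}" using S0 by blast
    have "\<not> (\<forall>w\<in>cube U. \<forall>x\<in>cube ?V. \<forall>y\<in>cube ?V. ?g (padd w x) = ?g (padd w y))"
    proof
      assume "\<forall>w\<in>cube U. \<forall>x\<in>cube ?V. \<forall>y\<in>cube ?V. ?g (padd w x) = ?g (padd w y)"
      then have "fc ?I ?g S0 = 0" using part_b[OF fI UI _ S0V] S0(1) by blast
      then show False using S0(1) by simp
    qed
    then obtain w x y where w: "w \<in> cube U" and x: "x \<in> cube ?V" and y: "y \<in> cube ?V"
      and ne: "?g (padd w x) \<noteq> ?g (padd w y)" by blast
    define J' where "J' = J \<union> U"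
    define z' where "z' = (\<lambda>j. if j \<in> J then z j else w j)"
    have eqV: "{..<d} - J' = ?V" unfolding J'_def by blast
    have cd': "is_cell_data d J' z'"
      unfolding is_cell_data_def
    proof
      show "J' \<subseteq> {..<d}" using cd UI unfolding is_cell_data_def J'_def by blast
      show "\<forall>j\<in>J'. z' j = 1 \<or> z' j = -1"
      proof
        fix j assume "j \<in> J'"
        then show "z' j = 1 \<or> z' j = -1"
          using cd cube_val[OF w, of j] unfolding is_cell_data_def J'_def z'_def by auto
      qed
    qed
    have rp: "\<And>x. x \<in> cube ?V \<Longrightarrow> restr f J' z' x = ?g (padd w x)"
      unfolding J'_def z'_def using restr_padd[OF UI w] by blast
    have vpos: "var (cell d J' z') f > 0"
      unfolding var_cell_iff[OF cd'] eqV using x y ne rp by metis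
    have Mge: "Max ((\<lambda>k. corr2 (cell d J' z') f (\<lambda>x. x k)) ` ({..<d} - J')) \<ge> lam"
      using sid cd' vpos unfolding SID_def by blast
    have "x \<noteq> y" using ne by auto
    have "?V \<noteq> {}"
    proof
      assume e: "?V = {}"
      then have "x \<in> cube {}" "y \<in> cube {}" using x y by (metis e)+
      then show False using \<open>x \<noteq> y\<close> unfolding cube_empty by simp
    qed
    then have ne_img: "(\<lambda>k. corr2 (cell d J' z') f (\<lambda>x. x k)) ` ({..<d} - J') \<noteq> {}"
      unfolding eqV by simp
    then obtain k where k: "k \<in> {..<d} - J'"
      and kc: "corr2 (cell d J' z') f (\<lambda>x. x k) = Max ((\<lambda>k. corr2 (cell d J' z') f (\<lambda>x. x k)) ` ({..<d} - J'))"
    proof -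
      have "Max ((\<lambda>k. corr2 (cell d J' z') f (\<lambda>x. x k)) ` ({..<d} - J'))
          \<in> (\<lambda>k. corr2 (cell d J' z') f (\<lambda>x. x k)) ` ({..<d} - J')"
        by (rule Max_in[OF _ ne_img]) simp
      then show ?thesis using that by (metis (no_types, lifting) imageE)
    qed
    have "corr2 (cell d J' z') f (\<lambda>x. x k) > 0" using kc Mge lam by linarith
    then have "(\<Sum>x\<in>cube ({..<d} - J'). restr f J' z' x * x k) \<noteq> 0"
      using corr_cell_iff[OF cd' vpos k] by simp
    moreover have "(\<Sum>x\<in>cube ({..<d} - J'). restr f J' z' x * x k)
        = (\<Sum>x\<in>cube ?V. ?g (padd w x) * x k)"
      unfolding eqV using rp by (intro sum.cong refl) simp
    moreover have "(\<Sum>x\<in>cube ?V. ?g (padd w x) * x k) = 0"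
    proof (rule part_a[OF fI UI w _ ex])
      show "k \<in> ?V" using k eqV by simp
      show "\<forall>S\<in>Pow ?I. fc ?I ?g S \<noteq> 0 \<longrightarrow> (\<forall>k. S - U \<noteq> {k})" using U(2) by blast
    qed
    ultimately show False by simp
  qed
  then show "msp ({..<d} - J) (restr f J z)"
    unfolding msp_def using ex by blast
qed

lemma dir1:
  assumes "stable_msp d f"
  shows "\<exists>lam>0. SID d f lam"
proof -
  let ?M = "\<lambda>J C. Max ((\<lambda>k. corr2 C f (\<lambda>x. x k)) ` ({..<d} - J))"
  define Vs where "Vs = {?M J (cell d J z) | J z. is_cell_data d J z \<and> var (cell d J z) f > 0}"
  have "Vs \<subseteq> (\<lambda>(J, C). ?M J C) ` (Pow {..<d} \<times> Pow (cube {..<d}))"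
  proof
    fix v assume "v \<in> Vs"
    then obtain J z where v: "v = ?M J (cell d J z)" "is_cell_data d J z" unfolding Vs_def by blast
    then have "(J, cell d J z) \<in> Pow {..<d} \<times> Pow (cube {..<d})"
      unfolding is_cell_data_def cell_def by auto
    then show "v \<in> (\<lambda>(J, C). ?M J C) ` (Pow {..<d} \<times> Pow (cube {..<d}))"
      using v(1) by force
  qed
  moreover have "finite ((\<lambda>(J, C). ?M J C) ` (Pow {..<d} \<times> Pow (cube {..<d})))"
    using finite_cube[of "{..<d}"] by simp
  ultimately have fV: "finite Vs" by (rule finite_subset)
  have pos: "\<And>v. v \<in> Vs \<Longrightarrow> v > 0"
    using dir1_pos[OF assms] unfolding Vs_def by blast
  define lam where "lam = (if Vs = {} then 1 else Min Vs)"
  have "lam > 0"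
    unfolding lam_def using pos Min_in[OF fV] by auto
  moreover have "SID d f lam"
    unfolding SID_def
  proof (intro allI impI)
    fix J z assume "is_cell_data d J z" "var (cell d J z) f > 0"
    then have "?M J (cell d J z) \<in> Vs" unfolding Vs_def by blast
    then show "?M J (cell d J z) \<ge> lam"
      unfolding lam_def using Min_le[OF fV] by auto
  qed
  ultimately show ?thesis by blast
qed

theorem propositionG2:
  fixes d :: nat and f :: "(nat \<Rightarrow> real) \<Rightarrow> real"
  shows "stable_msp d f \<longleftrightarrow> (\<exists>lam>0. SID d f lam)"
  using dir1 dir2 by blast

end
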